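(* Let $r,s,t$ be nonzero reals and let $\lambda=(\lambda_k)_{k\ge 0}$ be a strictly increasing sequence of positive reals with $\lambda_k\to\infty$. For $x\in\omega$ put $\widehat W_n(x)=\frac{1}{\lambda_n}\sum_{k=0}^n(\lambda_k-\lambda_{k-1})(rx_k+sx_{k-1}+tx_{k-2})$ and, for $\mu\in\{c_0,c,\ell_\infty,\ell_p\}$, $\mu^\lambda(\widehat B)=\{x\in\omega:(\widehat W_n(x))_n\in\mu\}$, normed by $\|x\|=\sup_n|\widehat W_n(x)|$ for $\mu\in\{c_0,c,\ell_\infty\}$ and by $\|x\|=(\sum_n|\widehat W_n(x)|^p)^{1/p}$ for $\mu=\ell_p$, $1\le p<\infty$. Then $c_0^\lambda(\widehat B)$, $c^\lambda(\widehat B)$, $\ell_\infty^\lambda(\widehat B)$ and $\ell_p^\lambda(\widehat B)$ are norm isomorphic to $c_0$, $c$, $\ell_\infty$ and $\ell_p$ respectively, i.e. in each case there is a linear bijection onto the classical space preserving norms.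
   Context: $\omega$ is the space of all complex sequences indexed by $\mathbb{N}=\{0,1,2,\dots\}$; $\ell_\infty,c,c_0,\ell_p$ are the spaces of bounded, convergent, null and absolutely $p$-summable sequences with their usual norms ($\sup$-norm on the first three). Convention: terms with negative subscript are $0$ ($x_{-1}=x_{-2}=0$, $\lambda_{-1}=0$). *)

theory Defs
  imports Complex_Main
begin

text \<open>Sequences in omega are functions nat => complex; negative subscripts are 0.\<close>

definition shift_seq :: "(nat \<Rightarrow> 'a::zero) \<Rightarrow> nat \<Rightarrow> int \<Rightarrow> 'a" where
  "shift_seq x k j = (if int k - j < 0 then 0 else x (nat (int k - j)))"

definition What :: "real \<Rightarrow> real \<Rightarrow> real \<Rightarrow> (nat \<Rightarrow> real) \<Rightarrow> (nat \<Rightarrow> complex) \<Rightarrow> nat \<Rightarrow> complex" where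
  "What r s t lam x n =
     complex_of_real (1 / lam n) *
     (\<Sum>k\<le>n. complex_of_real (lam k - shift_seq lam k 1) *
        (complex_of_real r * x k + complex_of_real s * shift_seq x k 1
           + complex_of_real t * shift_seq x k 2))"

definition c0_seq :: "(nat \<Rightarrow> complex) set" where
  "c0_seq = {x. x \<longlonglongrightarrow> 0}"

definition c_seq :: "(nat \<Rightarrow> complex) set" where
  "c_seq = {x. convergent x}"

definition linf_seq :: "(nat \<Rightarrow> complex) set" where
  "linf_seq = {x. Bseq x}"

definition lp_seq :: "real \<Rightarrow> (nat \<Rightarrow> complex) set" where
  "lp_seq p = {x. summable (\<lambda>n. norm (x n) powr p)}"

definition sup_norm :: "(nat \<Rightarrow> complex) \<Rightarrow> real" where
  "sup_norm x = (SUP n. norm (x n))"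

definition lp_norm :: "real \<Rightarrow> (nat \<Rightarrow> complex) \<Rightarrow> real" where
  "lp_norm p x = (\<Sum>n. norm (x n) powr p) powr (1 / p)"

definition lam_space :: "real \<Rightarrow> real \<Rightarrow> real \<Rightarrow> (nat \<Rightarrow> real) \<Rightarrow> (nat \<Rightarrow> complex) set
    \<Rightarrow> (nat \<Rightarrow> complex) set" where
  "lam_space r s t lam \<mu> = {x. What r s t lam x \<in> \<mu>}"

definition linear_on :: "((nat \<Rightarrow> complex) \<Rightarrow> (nat \<Rightarrow> complex)) \<Rightarrow> (nat \<Rightarrow> complex) set \<Rightarrow> bool" where
  "linear_on T X \<longleftrightarrow> (\<forall>x\<in>X. \<forall>y\<in>X. \<forall>a b :: complex.
      T (\<lambda>n. a * x n + b * y n) = (\<lambda>n. a * T x n + b * T y n))"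

definition norm_isomorphic ::
  "(nat \<Rightarrow> complex) set \<Rightarrow> ((nat \<Rightarrow> complex) \<Rightarrow> real) \<Rightarrow>
   (nat \<Rightarrow> complex) set \<Rightarrow> ((nat \<Rightarrow> complex) \<Rightarrow> real) \<Rightarrow> bool" where
  "norm_isomorphic X nX Y nY \<longleftrightarrow>
     (\<exists>T. linear_on T X \<and> bij_betw T X Y \<and> (\<forall>x\<in>X. nY (T x) = nX x))"

end

theory Submission
  imports Defs
begin

lemma sh0 [simp]: "shift_seq f 0 1 = 0" "shift_seq f 0 2 = 0" "shift_seq f (Suc 0) 2 = 0"
  by (auto simp: shift_seq_def)

lemma shS [simp]: "shift_seq f (Suc m) 1 = f m" "shift_seq f (Suc (Suc m)) 2 = f m"
  by (auto simp: shift_seq_def nat_int_add)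

definition dd :: "(nat \<Rightarrow> real) \<Rightarrow> nat \<Rightarrow> complex" where
  "dd lam k = complex_of_real (lam k - shift_seq lam k 1)"

definition BB :: "real \<Rightarrow> real \<Rightarrow> real \<Rightarrow> (nat \<Rightarrow> complex) \<Rightarrow> nat \<Rightarrow> complex" where
  "BB r s t x k = complex_of_real r * x k + complex_of_real s * shift_seq x k 1
           + complex_of_real t * shift_seq x k 2"

definition PP :: "(nat \<Rightarrow> real) \<Rightarrow> (nat \<Rightarrow> complex) \<Rightarrow> nat \<Rightarrow> complex" where
  "PP lam y n = complex_of_real (lam n) * y n"

definition DD :: "(nat \<Rightarrow> real) \<Rightarrow> (nat \<Rightarrow> complex) \<Rightarrow> nat \<Rightarrow> complex" where
  "DD lam y n = (PP lam y n - shift_seq (PP lam y) n 1) / dd lam n"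

fun GG :: "real \<Rightarrow> real \<Rightarrow> real \<Rightarrow> (nat \<Rightarrow> real) \<Rightarrow> (nat \<Rightarrow> complex) \<Rightarrow> nat \<Rightarrow> complex" where
  "GG r s t lam y 0 = DD lam y 0 / complex_of_real r"
| "GG r s t lam y (Suc 0) = (DD lam y 1 - complex_of_real s * GG r s t lam y 0) / complex_of_real r"
| "GG r s t lam y (Suc (Suc n)) = (DD lam y (Suc (Suc n)) - complex_of_real s * GG r s t lam y (Suc n)
      - complex_of_real t * GG r s t lam y n) / complex_of_real r"

lemma What_alt: "What r s t lam x n = complex_of_real (1 / lam n) * (\<Sum>k\<le>n. dd lam k * BB r s t x k)"
  by (simp add: What_def dd_def BB_def)

lemma dd_nz:
  assumes "strict_mono lam" "\<And>k. lam k > 0"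
  shows "dd lam k \<noteq> 0"
proof (cases k)
  case 0 then show ?thesis using assms(2)[of 0] by (simp add: dd_def)
next
  case (Suc m) then show ?thesis using strict_monoD[OF assms(1), of m "Suc m"] by (simp add: dd_def)
qed

lemma tele: "(\<Sum>k\<le>n. (PP lam y k - shift_seq (PP lam y) k 1)) = PP lam y n"
  by (induction n) auto

lemma BB_GG:
  assumes "r \<noteq> 0"
  shows "BB r s t (GG r s t lam y) n = DD lam y n"
proof (cases n)
  case 0 then show ?thesis using assms by (simp add: BB_def)
next
  case (Suc m) then show ?thesis
    using assms by (cases m) (auto simp: BB_def field_simps)
qed

lemma What_GG:
  assumes "r \<noteq> 0" "strict_mono lam" "\<And>k. lam k > 0"
  shows "What r s t lam (GG r s t lam y) n = y n"
proof -
  have "(\<Sum>k\<le>n. dd lam k * BB r s t (GG r s t lam y) k) = (\<Sum>k\<le>n. (PP lam y k - shift_seq (PP lam y) k 1))"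
    using dd_nz[OF assms(2,3)] by (simp add: BB_GG[OF assms(1)] DD_def)
  also have "\<dots> = PP lam y n" by (rule tele)
  finally show ?thesis using assms(3)[of n]
    by (simp add: What_alt PP_def field_simps)
qed

lemma PP_What:
  assumes "\<And>k. lam k > 0"
  shows "PP lam (What r s t lam x) n = (\<Sum>k\<le>n. dd lam k * BB r s t x k)"
  using assms[of n] by (simp add: What_alt PP_def)

lemma DD_What:
  assumes "strict_mono lam" "\<And>k. lam k > 0"
  shows "DD lam (What r s t lam x) n = BB r s t x n"
proof (cases n)
  case 0 then show ?thesis using dd_nz[OF assms] PP_What[OF assms(2)]
    by (simp add: DD_def)
next
  case (Suc m)
  then show ?thesis using dd_nz[OF assms] PP_What[OF assms(2)]
    by (simp add: DD_def)
qed

lemma GG_What: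
  assumes "r \<noteq> 0" "strict_mono lam" "\<And>k. lam k > 0"
  shows "GG r s t lam (What r s t lam x) n = x n"
proof (induction n rule: less_induct)
  case (less n)
  show ?case
  proof (cases n)
    case 0 then show ?thesis using assms(1) DD_What[OF assms(2,3)] by (simp add: BB_def)
  next
    case (Suc m)
    show ?thesis
    proof (cases m)
      case 0 then show ?thesis using Suc less[of 0] assms(1) DD_What[OF assms(2,3)]
        by (simp add: BB_def field_simps)
    next
      case (Suc j) then show ?thesis using \<open>n = Suc m\<close> less[of j] less[of "Suc j"] assms(1) DD_What[OF assms(2,3)]
        by (simp add: BB_def field_simps)
    qed
  qed
qed

lemma sh_lin: "shift_seq (\<lambda>n. a * x n + b * y n) k j = a * shift_seq x k j + b * shift_seq y k j"
  for a b :: complex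
  by (simp add: shift_seq_def)

lemma BB_lin: "BB r s t (\<lambda>n. a * x n + b * y n) k = a * BB r s t x k + b * BB r s t y k"
  by (simp add: BB_def sh_lin algebra_simps)

lemma What_lin: "What r s t lam (\<lambda>n. a * x n + b * y n) = (\<lambda>n. a * What r s t lam x n + b * What r s t lam y n)"
  by (rule ext) (simp add: What_alt BB_lin distrib_left sum.distrib mult.left_commute[of _ a] mult.left_commute[of _ b] flip: sum_distrib_left)

lemma gen:
  assumes "r \<noteq> 0" "strict_mono lam" "\<And>k. lam k > 0"
  shows "norm_isomorphic (lam_space r s t lam \<mu>) (\<lambda>x. N (What r s t lam x)) \<mu> N"
  unfolding norm_isomorphic_def
proof (intro exI[of _ "What r s t lam"] conjI ballI)
  show "linear_on (What r s t lam) (lam_space r s t lam \<mu>)"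
    by (simp add: linear_on_def What_lin)
  have inv1: "\<And>x. GG r s t lam (What r s t lam x) = x" using GG_What[OF assms] by auto
  have inv2: "\<And>y. What r s t lam (GG r s t lam y) = y" using What_GG[OF assms] by auto
  show "bij_betw (What r s t lam) (lam_space r s t lam \<mu>) \<mu>"
    unfolding bij_betw_def
  proof
    show "inj_on (What r s t lam) (lam_space r s t lam \<mu>)"
      by (metis inj_onI inv1)
    show "What r s t lam ` lam_space r s t lam \<mu> = \<mu>"
    proof
      show "What r s t lam ` lam_space r s t lam \<mu> \<subseteq> \<mu>" by (auto simp: lam_space_def)
      show "\<mu> \<subseteq> What r s t lam ` lam_space r s t lam \<mu>"
      proof
        fix y assume "y \<in> \<mu>"
        then show "y \<in> What r s t lam ` lam_space r s t lam \<mu>"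
          by (intro image_eqI[of _ _ "GG r s t lam y"]) (auto simp: inv2 lam_space_def)
      qed
    qed
  qed
qed simp

theorem theorem2:
  fixes r s t :: real and lam :: "nat \<Rightarrow> real"
  assumes "r \<noteq> 0" "s \<noteq> 0" "t \<noteq> 0"
    and "strict_mono lam" and "\<And>k. lam k > 0"
    and "filterlim lam at_top sequentially"
  shows "norm_isomorphic (lam_space r s t lam c0_seq) (\<lambda>x. sup_norm (What r s t lam x))
           c0_seq sup_norm \<and>
         norm_isomorphic (lam_space r s t lam c_seq) (\<lambda>x. sup_norm (What r s t lam x))
           c_seq sup_norm \<and>
         norm_isomorphic (lam_space r s t lam linf_seq) (\<lambda>x. sup_norm (What r s t lam x))
           linf_seq sup_norm \<and>
         (\<forall>p::real. 1 \<le> p \<longrightarrow> norm_isomorphic (lam_space r s t lam (lp_seq p))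
           (\<lambda>x. lp_norm p (What r s t lam x)) (lp_seq p) (lp_norm p))"
  using gen[OF assms(1,4,5)] by blast

end
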